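(* Let $\mathcal{L}$ and $\mathcal{L}'$ be lattices such that $\mathcal{L}$ can be embedded in $\mathcal{L}'$, and let $l,u:\mathbb{N}\to\mathbb{N}$. If $\mathcal{L}$ is $\Omega(l(n))$ then $\mathcal{L}'$ is $\Omega(l(n))$; and if $\mathcal{L}'$ is $O(u(n))$ then $\mathcal{L}$ is $O(u(n))$.
   Context: A lattice means a partially ordered set $(\mathcal{L},\sqsubseteq)$ with least element $\bot$ in which any two elements have a least upper bound $\sqcup$; for finite $S$, $\bigsqcup S$ is its least upper bound ($\bigsqcup\emptyset=\bot$). A lattice homomorphism $h:\mathcal{L}\to\mathcal{L}'$ satisfies $h(\bot_{\mathcal{L}})=\bot_{\mathcal{L}'}$ and $h(\ell\sqcup\ell')=h(\ell)\sqcup h(\ell')$; it is an embedding (and $\mathcal{L}$ can be embedded in $\mathcal{L}'$) if $h$ is injective. The closure set of a finite $S\subseteq\mathcal{L}$ is $C(S)=\{\bigsqcup S' : S'\subseteq S\}$, and $CS_{\mathcal{L}}(n)=\max\{|C(S)| : S\subseteq\mathcal{L}\text{ finite}, |S|\le n\}$. For $f,g:\mathbb{N}\to\mathbb{N}$: $f$ is $O(g)$ iff $\exists N_0\in\mathbb{N},\exists$ rational $C>0$ with $f(n)\le Cg(n)$ for all $n\ge N_0$; $f$ is $\Omega(g)$ iff $\exists N_0,\exists C>0$ rational with $f(n)\ge Cg(n)$ for all $n\ge N_0$. A lattice $\mathcal{L}$ is $O(f(n))$ (resp. $\Omega(f(n))$) iff $CS_{\mathcal{L}}(n)$ is. *)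

theory Defs
  imports Main "HOL.Rat"
begin

text \<open>A lattice in the paper's sense (poset with least element and binary joins)
  is a type of class bounded_semilattice_sup_bot.\<close>

definition lub_set :: "'a::bounded_semilattice_sup_bot set \<Rightarrow> 'a" where
  "lub_set S = (THE x. (\<forall>y\<in>S. y \<le> x) \<and> (\<forall>z. (\<forall>y\<in>S. y \<le> z) \<longrightarrow> x \<le> z))"

definition closure_set :: "'a::bounded_semilattice_sup_bot set \<Rightarrow> 'a set" where
  "closure_set S = {lub_set S' | S'. S' \<subseteq> S}"

definition CS :: "'a::bounded_semilattice_sup_bot itself \<Rightarrow> nat \<Rightarrow> nat" where
  "CS _ n = Max {card (closure_set S) | S :: 'a set. finite S \<and> card S \<le> n}"

definition lattice_hom :: "('a::bounded_semilattice_sup_bot \<Rightarrow> 'b::bounded_semilattice_sup_bot) \<Rightarrow> bool" where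
  "lattice_hom h \<longleftrightarrow> h bot = bot \<and> (\<forall>x y. h (sup x y) = sup (h x) (h y))"

definition lattice_embedding :: "('a::bounded_semilattice_sup_bot \<Rightarrow> 'b::bounded_semilattice_sup_bot) \<Rightarrow> bool" where
  "lattice_embedding h \<longleftrightarrow> lattice_hom h \<and> inj h"

definition bigO :: "(nat \<Rightarrow> nat) \<Rightarrow> (nat \<Rightarrow> nat) \<Rightarrow> bool" where
  "bigO f g \<longleftrightarrow> (\<exists>N0::nat. \<exists>C::rat. C > 0 \<and> (\<forall>n\<ge>N0. of_nat (f n) \<le> C * of_nat (g n)))"

definition bigOmega :: "(nat \<Rightarrow> nat) \<Rightarrow> (nat \<Rightarrow> nat) \<Rightarrow> bool" where
  "bigOmega f g \<longleftrightarrow> (\<exists>N0::nat. \<exists>C::rat. C > 0 \<and> (\<forall>n\<ge>N0. of_nat (f n) \<ge> C * of_nat (g n)))"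

end

theory Submission
  imports Defs
begin

definition is_lub' :: "'a::bounded_semilattice_sup_bot set \<Rightarrow> 'a \<Rightarrow> bool" where
  "is_lub' S x \<longleftrightarrow> (\<forall>y\<in>S. y \<le> x) \<and> (\<forall>z. (\<forall>y\<in>S. y \<le> z) \<longrightarrow> x \<le> z)"

lemma lub_eq: "is_lub' S x \<Longrightarrow> lub_set S = x"
  unfolding lub_set_def
  apply (rule the_equality)
   apply (simp add: is_lub'_def)
  by (meson antisym is_lub'_def)

lemma lub_empty: "lub_set ({}::'a::bounded_semilattice_sup_bot set) = bot"
  by (rule lub_eq) (simp add: is_lub'_def)

lemma lub_exists: "finite S \<Longrightarrow> is_lub' S (lub_set S)"
proof (induction S rule: finite_induct)
  case empty then show ?case by (simp add: lub_empty is_lub'_def)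
next
  case (insert x F)
  have "is_lub' (insert x F) (sup x (lub_set F))"
    using insert.IH unfolding is_lub'_def by (auto intro: le_supI2)
  then show ?case using lub_eq by metis
qed

lemma lub_insert: "finite S \<Longrightarrow> lub_set (insert x S) = sup x (lub_set S)"
proof -
  assume f: "finite S"
  have "is_lub' (insert x S) (sup x (lub_set S))"
    using lub_exists[OF f] unfolding is_lub'_def by (auto intro: le_supI2)
  then show ?thesis by (rule lub_eq)
qed

lemma hom_lub:
  assumes "lattice_hom h" "finite S"
  shows "h (lub_set S) = lub_set (h ` S)"
  using assms(2)
proof (induction S rule: finite_induct)
  case empty then show ?case using assms(1) by (simp add: lub_empty lattice_hom_def)
next
  case (insert x F)
  then show ?case using assms(1) by (simp add: lub_insert lattice_hom_def)
qed

lemma closure_eq: "closure_set S = lub_set ` Pow S"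
  unfolding closure_set_def by auto

lemma CS_finite:
  "finite {card (closure_set S) | S :: 'a::bounded_semilattice_sup_bot set. finite S \<and> card S \<le> n}"
proof (rule finite_subset[of _ "{..(2::nat)^n}"])
  show "{card (closure_set S) | S :: 'a set. finite S \<and> card S \<le> n} \<subseteq> {..2^n}"
  proof
    fix k assume "k \<in> {card (closure_set S) | S :: 'a set. finite S \<and> card S \<le> n}"
    then obtain S :: "'a set" where S: "finite S" "card S \<le> n" "k = card (closure_set S)" by blast
    have "k \<le> card (Pow S)" unfolding S(3) closure_eq using S(1) by (simp add: card_image_le)
    also have "\<dots> = 2 ^ card S" using S(1) by (simp add: card_Pow)
    also have "\<dots> \<le> 2 ^ n" using S(2) by simp
    finally show "k \<in> {..2^n}" by simp
  qed
qed simp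

lemma CS_mono:
  fixes h :: "'a::bounded_semilattice_sup_bot \<Rightarrow> 'b::bounded_semilattice_sup_bot"
  assumes "lattice_embedding h"
  shows "CS TYPE('a) n \<le> CS TYPE('b) n"
proof -
  have hom: "lattice_hom h" and inj: "inj h" using assms by (auto simp: lattice_embedding_def)
  have "\<forall>k \<in> {card (closure_set S) | S :: 'a set. finite S \<and> card S \<le> n}.
        k \<le> CS TYPE('b) n"
  proof
    fix k assume "k \<in> {card (closure_set S) | S :: 'a set. finite S \<and> card S \<le> n}"
    then obtain S :: "'a set" where S: "finite S" "card S \<le> n" "k = card (closure_set S)" by blast
    have "closure_set (h ` S) = h ` closure_set S"
    proof -
      have "lub_set ` Pow (h ` S) = (\<lambda>T. lub_set (h ` T)) ` Pow S"
      proof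
        show "lub_set ` Pow (h ` S) \<subseteq> (\<lambda>T. lub_set (h ` T)) ` Pow S"
        proof
          fix y assume "y \<in> lub_set ` Pow (h ` S)"
          then obtain U where U: "U \<subseteq> h ` S" "y = lub_set U" by auto
          then have "U = h ` (S \<inter> h -` U)" by auto
          then have "y = (\<lambda>T. lub_set (h ` T)) (S \<inter> h -` U)" using U by simp
          then show "y \<in> (\<lambda>T. lub_set (h ` T)) ` Pow S" by blast
        qed
      qed auto
      also have "\<dots> = h ` lub_set ` Pow S"
        using hom_lub[OF hom] S(1) by (auto simp: image_image intro!: image_cong dest: finite_subset)
      finally show ?thesis by (simp add: closure_eq)
    qed
    then have "card (closure_set (h ` S)) = k"
      using S(3) inj by (simp add: card_image inj_on_subset)
    moreover have "card (h ` S) \<le> n" using S(2) card_image_le[OF S(1), of h] by linarith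
    moreover have "finite (h ` S)" using S(1) by simp
    ultimately have "k \<in> {card (closure_set S) | S :: 'b set. finite S \<and> card S \<le> n}" by blast
    then show "k \<le> CS TYPE('b) n" unfolding CS_def by (rule Max_ge[OF CS_finite])
  qed
  moreover have "card (closure_set ({}::'a set)) \<in> {card (closure_set S) | S :: 'a set. finite S \<and> card S \<le> n}"
    by auto
  ultimately show ?thesis unfolding CS_def[of "TYPE('a)"]
    using CS_finite by (subst Max_le_iff) (auto simp: CS_def)
qed

theorem mainTheorem2:
  fixes h :: "'a::bounded_semilattice_sup_bot \<Rightarrow> 'b::bounded_semilattice_sup_bot"
    and l u :: "nat \<Rightarrow> nat"
  assumes "lattice_embedding h"
  shows "(bigOmega (CS TYPE('a)) l \<longrightarrow> bigOmega (CS TYPE('b)) l)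
       \<and> (bigO (CS TYPE('b)) u \<longrightarrow> bigO (CS TYPE('a)) u)"
proof -
  have m: "\<And>n. (of_nat (CS TYPE('a) n) :: rat) \<le> of_nat (CS TYPE('b) n)"
    using CS_mono[OF assms] by simp
  show ?thesis unfolding bigOmega_def bigO_def
    by (meson m order_trans)
qed

end
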